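(* Let $P$ be a finite point set and $C$ a convex body in the plane, and let $\Pi$ be a convex polygon with $P\cap C\subseteq\Pi\subseteq C$. Then there is a convex polygon $\Pi'$ such that (A) $P\cap C\subseteq\Pi'\subseteq\Pi$; (B) the number of vertices of $\Pi'$ is at most twice the number of vertices of $\Pi$; and (C) every edge of $\Pi'$ lies on a line passing through two points of $P$. *)

theory Defs
  imports "HOL-Analysis.Analysis"
begin

definition convex_body :: "(real^2) set \<Rightarrow> bool" where
  "convex_body C \<longleftrightarrow> compact C \<and> convex C \<and> interior C \<noteq> {}"

text \<open>A convex polygon: the convex hull of a finite point set (degenerate cases allowed).\<close>
definition convex_polygon :: "(real^2) set \<Rightarrow> bool" where
  "convex_polygon K \<longleftrightarrow> (\<exists>S. finite S \<and> K = convex hull S)"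

definition vertices :: "(real^2) set \<Rightarrow> (real^2) set" where
  "vertices K = {v. v extreme_point_of K}"

definition edges :: "(real^2) set \<Rightarrow> (real^2) set set" where
  "edges K = {F. F face_of K \<and> aff_dim F = 1}"

end

theory Submission
  imports Defs
begin

lemma inner2: "(a::real^2) \<bullet> d = a$1*d$1 + a$2*d$2"
  by (simp add: inner_vec_def sum_2)

lemma three_dirs_real:
  fixes x1 y1 x2 y2 x3 y3 p1 q1 p2 q2 p3 q3 :: real
  assumes "p1*x1+q1*y1 = 0" "p2*x2+q2*y2=0" "p3*x3+q3*y3=0"
    "p1*x2+q1*y2<0" "p1*x3+q1*y3<0" "p2*x1+q2*y1<0" "p2*x3+q2*y3<0"
    "p3*x1+q3*y1<0" "p3*x2+q3*y2<0"
  shows False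
proof -
  define c where "c = x1*y2 - y1*x2"
  define al where "al = x3*y2 - y3*x2"
  define be where "be = x1*y3 - y1*x3"
  have id: "c*(p*x3+q*y3) = al*(p*x1+q*y1) + be*(p*x2+q*y2)" for p q
    unfolding c_def al_def be_def by algebra
  have id2: "(x1*x1+y1*y1)*(p*x2+q*y2) = (x1*x2+y1*y2)*(p*x1+q*y1) + c*(q*x1 - p*y1)" for p q
    unfolding c_def by algebra
  have e1: "c*(p1*x3+q1*y3) = be*(p1*x2+q1*y2)" using id[of p1 q1] assms(1) by simp
  have e2: "c*(p2*x3+q2*y3) = al*(p2*x1+q2*y1)" using id[of p2 q2] assms(2) by simp
  have e3: "0 = al*(p3*x1+q3*y1) + be*(p3*x2+q3*y2)" using id[of p3 q3] assms(3) by simp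
  consider "c > 0" | "c < 0" | "c = 0" by linarith
  then show False
  proof cases
    case 1
    have "be*(p1*x2+q1*y2) < 0" using e1 1 assms(5) by (metis mult_pos_neg)
    then have b: "be > 0" using assms(4) by (metis mult_nonpos_nonpos linorder_not_le order_less_imp_le not_less)
    have "al*(p2*x1+q2*y1) < 0" using e2 1 assms(7) by (metis mult_pos_neg)
    then have a: "al > 0" using assms(6) by (metis mult_nonpos_nonpos linorder_not_le order_less_imp_le not_less)
    have "al*(p3*x1+q3*y1) < 0" using a assms(8) by (simp add: mult_pos_neg)
    moreover have "be*(p3*x2+q3*y2) < 0" using b assms(9) by (simp add: mult_pos_neg)
    ultimately show False using e3 by linarith
  next
    case 2
    have "be*(p1*x2+q1*y2) > 0" using e1 2 assms(5) by (metis mult_neg_neg)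
    then have b: "be < 0" using assms(4) by (auto simp: zero_less_mult_iff)
    have "al*(p2*x1+q2*y1) > 0" using e2 2 assms(7) by (metis mult_neg_neg)
    then have a: "al < 0" using assms(6) by (auto simp: zero_less_mult_iff)
    have "al*(p3*x1+q3*y1) > 0" using a assms(8) by (simp add: mult_neg_neg)
    moreover have "be*(p3*x2+q3*y2) > 0" using b assms(9) by (simp add: mult_neg_neg)
    ultimately show False using e3 by linarith
  next
    case 3
    have "(x1*x1+y1*y1)*(p1*x2+q1*y2) = 0" using id2[of p1 q1] assms(1) 3 by simp
    moreover have "x1*x1+y1*y1 > 0"
    proof -
      have "x1 \<noteq> 0 \<or> y1 \<noteq> 0" using assms(6) by auto
      then show ?thesis by (metis add_pos_nonneg add_nonneg_pos not_real_square_gt_zero zero_le_square)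
    qed
    ultimately show False using assms(4) by simp
  qed
qed

lemma three_dirs:
  fixes a1 a2 a3 d1 d2 d3 :: "real^2"
  assumes "a1\<bullet>d1 = 0" "a2\<bullet>d2 = 0" "a3\<bullet>d3 = 0" "a1\<bullet>d2 < 0" "a1\<bullet>d3 < 0"
    "a2\<bullet>d1 < 0" "a2\<bullet>d3 < 0" "a3\<bullet>d1 < 0" "a3\<bullet>d2 < 0"
  shows False
  using assms unfolding inner2 by (rule three_dirs_real)

lemma parallel_real:
  fixes x y p1 q1 p2 q2 :: real
  assumes "p1*x+q1*y = 0" "p2*x+q2*y = 0" "x \<noteq> 0 \<or> y \<noteq> 0"
  shows "(p1*p1+q1*q1)*p2 = (p1*p2+q1*q2)*p1 \<and> (p1*p1+q1*q1)*q2 = (p1*p2+q1*q2)*q1"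
proof -
  have "x*(p1*q2 - q1*p2) = q2*(p1*x+q1*y) - q1*(p2*x+q2*y)" by algebra
  moreover have "y*(p1*q2 - q1*p2) = p1*(p2*x+q2*y) - p2*(p1*x+q1*y)" by algebra
  ultimately have c: "p1*q2 - q1*p2 = 0" using assms by auto
  have "(p1*p1+q1*q1)*p2 - (p1*p2+q1*q2)*p1 = - q1*(p1*q2 - q1*p2)" by algebra
  moreover have "(p1*p1+q1*q1)*q2 - (p1*p2+q1*q2)*q1 = p1*(p1*q2 - q1*p2)" by algebra
  ultimately show ?thesis using c by simp
qed

lemma double_count:
  fixes A :: "'a set" and B :: "'b set"
  assumes "finite A" "finite B" "m > 0"
    "\<And>a. a\<in>A \<Longrightarrow> m \<le> card {b\<in>B. R a b}"
    "\<And>b. b\<in>B \<Longrightarrow> card {a\<in>A. R a b} \<le> m"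
  shows "card A \<le> card B"
proof -
  have c1: "card {b\<in>B. R a b} = (\<Sum>b\<in>B. if R a b then 1 else 0)" for a
    using assms(2) by (simp add: sum.If_cases Int_def)
  have c2: "card {a\<in>A. R a b} = (\<Sum>a\<in>A. if R a b then 1 else 0)" for b
    using assms(1) by (simp add: sum.If_cases Int_def)
  have "m * card A = (\<Sum>a\<in>A. m)" by simp
  also have "\<dots> \<le> (\<Sum>a\<in>A. card {b\<in>B. R a b})" using assms(4) by (intro sum_mono) auto
  also have "\<dots> = (\<Sum>a\<in>A. \<Sum>b\<in>B. if R a b then 1 else 0)" using c1 by simp
  also have "\<dots> = (\<Sum>b\<in>B. \<Sum>a\<in>A. if R a b then 1 else 0)" by (rule sum.swap)
  also have "\<dots> = (\<Sum>b\<in>B. card {a\<in>A. R a b})" using c2 by simp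
  also have "\<dots> \<le> (\<Sum>b\<in>B. m)" using assms(5) by (intro sum_mono) auto
  also have "\<dots> = m * card B" by simp
  finally show ?thesis using assms(3) by simp
qed

lemma extreme_le2:
  fixes S :: "'a::euclidean_space set"
  assumes "compact S" "convex S" "aff_dim S \<le> 1"
  shows "finite {v. v extreme_point_of S} \<and> card {v. v extreme_point_of S} \<le> 2"
proof (cases "S = {}")
  case True then show ?thesis by simp
next
  case False
  then obtain a b where ab: "S = closed_segment a b"
    using compact_convex_collinear_segment assms collinear_aff_dim by metis
  then have "{v. v extreme_point_of S} \<subseteq> {a, b}"
    using extreme_points_of_convex_hull[of "{a,b}"] by (simp add: segment_convex_hull)
  moreover have "card {a,b} \<le> 2" by (simp add: card_insert_le_m1)
  ultimately show ?thesis by (meson card_mono finite.emptyI finite.insertI finite_subset order_trans)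
qed

lemma face_two_extreme:
  fixes Q :: "'a::euclidean_space set"
  assumes "polytope Q" "C face_of Q" "aff_dim C = 1"
  obtains p q where "p \<noteq> q" "p extreme_point_of Q" "q extreme_point_of Q" "p \<in> C" "q \<in> C"
proof -
  have pC: "polytope C" using assms face_of_polytope_polytope by blast
  define E where "E = {v. v extreme_point_of C}"
  have CE: "C = convex hull E" unfolding E_def
    using Krein_Milman_Minkowski pC polytope_imp_compact polytope_imp_convex by blast
  have "\<exists>p\<in>E. \<exists>q\<in>E. p \<noteq> q"
  proof (rule ccontr)
    assume "\<not> ?thesis"
    then obtain p where "E \<subseteq> {p}" by blast
    then have "C \<subseteq> {p}" using CE hull_mono by fastforce
    then have "aff_dim C \<le> aff_dim {p}" by (rule aff_dim_subset)
    then show False using assms(3) by simp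
  qed
  then obtain p q where "p \<in> E" "q \<in> E" "p \<noteq> q" by blast
  then show ?thesis using that extreme_point_of_face[OF assms(2)] unfolding E_def by blast
qed

lemma line_eq:
  fixes a p q :: "real^2"
  assumes "a \<noteq> 0" "p \<noteq> q" "a \<bullet> p = b" "a \<bullet> q = b"
  shows "{x. a \<bullet> x = b} = affine hull {p, q}"
proof -
  have "affine hull {p,q} = {x. a \<bullet> x = b}"
  proof (rule affine_dim_equal)
    show "affine (affine hull {p, q})" by simp
    show "affine {x. a \<bullet> x = b}" by (simp add: affine_hyperplane)
    show "affine hull {p, q} \<noteq> {}" by simp
    show "affine hull {p, q} \<subseteq> {x. a \<bullet> x = b}"
      using assms by (intro hull_minimal) (auto simp: affine_hyperplane)
    show "aff_dim (affine hull {p, q}) = aff_dim {x. a \<bullet> x = b}"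
      using assms by (simp add: aff_dim_hyperplane aff_dim_2)
  qed
  then show ?thesis by simp
qed

lemma halfplane_unique:
  fixes a1 a2 p q :: "real^2" and Q :: "(real^2) set"
  assumes "a1 \<noteq> 0" "a2 \<noteq> 0" "aff_dim Q = 2" "Q \<subseteq> {x. a1 \<bullet> x \<le> b1}" "Q \<subseteq> {x. a2 \<bullet> x \<le> b2}"
    "p \<noteq> q" "a1 \<bullet> p = b1" "a1 \<bullet> q = b1" "a2 \<bullet> p = b2" "a2 \<bullet> q = b2"
  shows "{x. a1 \<bullet> x \<le> b1} = {x. a2 \<bullet> x \<le> b2}"
proof -
  define d where "d = q - p"
  have d1: "a1 \<bullet> d = 0" "a2 \<bullet> d = 0" using assms unfolding d_def by (simp_all add: inner_diff_right)
  have dnz: "d$1 \<noteq> 0 \<or> d$2 \<noteq> 0"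
    using assms(6) unfolding d_def by (metis (mono_tags) cart_eq_inner_axis exhaust_2 vec_eq_iff inner_diff_right eq_iff_diff_eq_0 vector_minus_component)
  define t where "t = (a1 \<bullet> a2) / (a1 \<bullet> a1)"
  have n1: "a1 \<bullet> a1 > 0" using assms(1) by simp
  have par: "(a1$1*a1$1+a1$2*a1$2)*a2$1 = (a1$1*a2$1+a1$2*a2$2)*a1$1 \<and> (a1$1*a1$1+a1$2*a1$2)*a2$2 = (a1$1*a2$1+a1$2*a2$2)*a1$2"
    using parallel_real[of "a1$1" "d$1" "a1$2" "d$2" "a2$1" "a2$2"] d1 dnz unfolding inner2 by simp
  have a2t: "a2 = t *\<^sub>R a1"
  proof -
    have e: "(a1 \<bullet> a1) * a2$1 = (a1 \<bullet> a2) * a1$1" "(a1 \<bullet> a1) * a2$2 = (a1 \<bullet> a2) * a1$2"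
      using par by (simp_all only: inner2)
    have "a2$i = t * a1$i" for i
    proof -
      have "i = 1 \<or> i = 2" using exhaust_2 by blast
      then show ?thesis using e n1 unfolding t_def by (auto simp: field_simps)
    qed
    then show ?thesis by (simp add: vec_eq_iff)
  qed
  have b2t: "b2 = t * b1" using assms(7,9) a2t by simp
  have "t \<noteq> 0" using assms(2) a2t by auto
  moreover have "\<not> t < 0"
  proof
    assume "t < 0"
    have "Q \<subseteq> {x. a1 \<bullet> x = b1}"
    proof
      fix x assume "x \<in> Q"
      then have "a1 \<bullet> x \<le> b1" "t * (a1 \<bullet> x) \<le> t * b1" using assms(4,5) a2t b2t by auto
      then show "x \<in> {x. a1 \<bullet> x = b1}" using \<open>t < 0\<close> by (simp add: mult_le_cancel_left)
    qed
    then have "aff_dim Q \<le> aff_dim {x. a1 \<bullet> x = b1}" by (rule aff_dim_subset)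
    then show False using assms(1,3) by (simp add: aff_dim_hyperplane)
  qed
  ultimately have "t > 0" by linarith
  then show ?thesis using a2t b2t by (auto simp: mult_le_cancel_left)
qed


lemma facet_dim1:
  fixes Q :: "(real^2) set"
  assumes "aff_dim Q = 2" "C facet_of Q"
  shows "aff_dim C = 1"
  using assms by (simp add: facet_of_def)

lemma dim1_two_points:
  fixes C :: "'a::euclidean_space set"
  assumes "aff_dim C = 1" "v \<in> C"
  obtains u where "u \<in> C" "u \<noteq> v"
proof -
  have "\<not> C \<subseteq> {v}"
  proof
    assume "C \<subseteq> {v}"
    then have "aff_dim C \<le> aff_dim {v}" by (rule aff_dim_subset)
    then show False using assms by simp
  qed
  then show ?thesis using that by blast
qed

lemma two_facets_meet:
  fixes Q :: "(real^2) set"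
  assumes "convex Q" "aff_dim Q = 2" "C1 facet_of Q" "C2 facet_of Q" "C1 \<noteq> C2"
    "x \<in> C1" "x \<in> C2" "y \<in> C1" "y \<in> C2"
  shows "x = y"
proof (rule ccontr)
  assume xy: "x \<noteq> y"
  have d1: "aff_dim C1 = 1" "aff_dim C2 = 1" using assms facet_dim1 by blast+
  have f1: "C1 face_of Q" "C2 face_of Q" using assms facet_of_imp_face_of by blast+
  define D where "D = C1 \<inter> C2"
  have "D face_of Q" unfolding D_def using f1 face_of_Int by blast
  then have DC1: "D face_of C1" using face_of_subset[of D Q C1] f1 face_of_imp_subset unfolding D_def by blast
  have "D \<noteq> C1"
  proof
    assume "D = C1"
    then have "C1 \<subseteq> C2" unfolding D_def by blast
    then have "C1 face_of C2" using face_of_subset f1 face_of_imp_subset by blast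
    then have "aff_dim C1 < aff_dim C2" using face_of_aff_dim_lt face_of_imp_convex f1 assms(5) by blast
    then show False using d1 by simp
  qed
  then have "aff_dim D < 1" using face_of_aff_dim_lt[OF face_of_imp_convex[OF f1(1)] DC1] d1 by simp
  moreover have "aff_dim {x,y} \<le> aff_dim D" using assms(6-9) unfolding D_def by (intro aff_dim_subset) auto
  ultimately show False using xy by (simp add: aff_dim_2)
qed

lemma facet_data:
  fixes Q :: "(real^2) set"
  assumes "polytope Q" "aff_dim Q = 2" "C facet_of Q" "v \<in> C"
  shows "\<exists>a b u. a \<noteq> 0 \<and> Q \<subseteq> {x. a \<bullet> x \<le> b} \<and> C = Q \<inter> {x. a \<bullet> x = b} \<and> u \<in> C \<and> u \<noteq> v"
proof -
  obtain a b where ab: "a \<noteq> 0" "Q \<subseteq> {x. a \<bullet> x \<le> b}" "C = Q \<inter> {x. a \<bullet> x = b}"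
    using facet_of_polyhedron[OF polytope_imp_polyhedron[OF assms(1)] assms(3)] by blast
  obtain u where "u \<in> C" "u \<noteq> v" using dim1_two_points facet_dim1 assms by metis
  then show ?thesis using ab by blast
qed

lemma strict_side:
  fixes Q :: "(real^2) set"
  assumes "polytope Q" "aff_dim Q = 2" "Ci facet_of Q" "Cj facet_of Q" "Ci \<noteq> Cj"
    "Q \<subseteq> {x. a \<bullet> x \<le> b}" "Ci = Q \<inter> {x. a \<bullet> x = b}" "v \<in> Ci" "v \<in> Cj" "u \<in> Cj" "u \<noteq> v"
  shows "a \<bullet> (u - v) < 0"
proof -
  have uQ: "u \<in> Q" using assms(4,10) facet_of_imp_subset by blast
  have av: "a \<bullet> v = b" using assms(7,8) by blast
  have le: "a \<bullet> u \<le> b" using uQ assms(6) by blast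
  have "a \<bullet> u \<noteq> b"
  proof
    assume "a \<bullet> u = b"
    then have "u \<in> Ci" using uQ assms(7) by blast
    then show False using two_facets_meet[OF polytope_imp_convex[OF assms(1)] assms(2,3,4,5)] assms(8,9,10,11) by metis
  qed
  then show ?thesis using le av by (simp add: inner_diff_right)
qed

lemma vertex_le2_facets:
  fixes Q :: "(real^2) set"
  assumes "polytope Q" "aff_dim Q = 2"
  shows "card {C. C facet_of Q \<and> v \<in> C} \<le> 2"
proof (rule ccontr)
  let ?X = "{C. C facet_of Q \<and> v \<in> C}"
  assume "\<not> ?thesis"
  then have "3 \<le> card ?X" by simp
  then obtain T where T: "T \<subseteq> ?X" "card T = 3" by (rule obtain_subset_with_card_n)
  then obtain C1 C2 C3 where "T = {C1,C2,C3}" "C1 \<noteq> C2" "C2 \<noteq> C3" "C1 \<noteq> C3"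
    unfolding card_3_iff by metis
  then have C: "C1 \<in> ?X" "C2 \<in> ?X" "C3 \<in> ?X" "C1 \<noteq> C2" "C2 \<noteq> C3" "C1 \<noteq> C3"
    using T(1) by auto
  have F: "C1 facet_of Q" "C2 facet_of Q" "C3 facet_of Q" "v \<in> C1" "v \<in> C2" "v \<in> C3"
    using C by auto
  obtain a1 b1 u1 where D1: "a1 \<noteq> 0" "Q \<subseteq> {x. a1 \<bullet> x \<le> b1}" "C1 = Q \<inter> {x. a1 \<bullet> x = b1}" "u1 \<in> C1" "u1 \<noteq> v"
    using facet_data[OF assms] F by blast
  obtain a2 b2 u2 where D2: "a2 \<noteq> 0" "Q \<subseteq> {x. a2 \<bullet> x \<le> b2}" "C2 = Q \<inter> {x. a2 \<bullet> x = b2}" "u2 \<in> C2" "u2 \<noteq> v"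
    using facet_data[OF assms] F by blast
  obtain a3 b3 u3 where D3: "a3 \<noteq> 0" "Q \<subseteq> {x. a3 \<bullet> x \<le> b3}" "C3 = Q \<inter> {x. a3 \<bullet> x = b3}" "u3 \<in> C3" "u3 \<noteq> v"
    using facet_data[OF assms] F by blast
  have z1: "a1 \<bullet> (u1 - v) = 0" using D1 C by (auto simp: inner_diff_right)
  have z2: "a2 \<bullet> (u2 - v) = 0" using D2 C by (auto simp: inner_diff_right)
  have z3: "a3 \<bullet> (u3 - v) = 0" using D3 C by (auto simp: inner_diff_right)
  show False
  proof (rule three_dirs[OF z1 z2 z3])
    show "a1 \<bullet> (u2 - v) < 0" by (rule strict_side[OF assms F(1,2) C(4) D1(2,3) F(4,5) D2(4,5)])
    show "a1 \<bullet> (u3 - v) < 0" by (rule strict_side[OF assms F(1,3) C(6) D1(2,3) F(4,6) D3(4,5)])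
    show "a2 \<bullet> (u1 - v) < 0" by (rule strict_side[OF assms F(2,1) C(4)[symmetric] D2(2,3) F(5,4) D1(4,5)])
    show "a2 \<bullet> (u3 - v) < 0" by (rule strict_side[OF assms F(2,3) C(5) D2(2,3) F(5,6) D3(4,5)])
    show "a3 \<bullet> (u1 - v) < 0" by (rule strict_side[OF assms F(3,1) C(6)[symmetric] D3(2,3) F(6,4) D1(4,5)])
    show "a3 \<bullet> (u2 - v) < 0" by (rule strict_side[OF assms F(3,2) C(5)[symmetric] D3(2,3) F(6,5) D2(4,5)])
  qed
qed

lemma vertex_ge2_facets:
  fixes Q :: "(real^2) set"
  assumes "polytope Q" "aff_dim Q = 2" "v extreme_point_of Q"
  shows "2 \<le> card {C. C facet_of Q \<and> v \<in> C}"
proof (rule ccontr)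
  let ?X = "{C. C facet_of Q \<and> v \<in> C}"
  assume "\<not> ?thesis"
  moreover have fin: "finite ?X" using finite_polytope_facets[OF assms(1)] by (rule rev_finite_subset) auto
  ultimately have "?X = {} \<or> (\<exists>C. ?X = {C})"
    by (metis (no_types, lifting) One_nat_def card_1_singletonE card_eq_0_iff less_2_cases not_less)
  have fv: "{v} face_of Q" using assms(3) face_of_singleton by blast
  have "{v} \<noteq> Q" using assms(2) by auto
  then have eq: "{v} = \<Inter>{F. F facet_of Q \<and> {v} \<subseteq> F}"
    using face_of_polyhedron[OF polytope_imp_polyhedron[OF assms(1)] fv] by blast
  have "{F. F facet_of Q \<and> {v} \<subseteq> F} = ?X" by auto
  then have eq2: "{v} = \<Inter>?X" using eq by simp
  {
    assume "?X = {}"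
    then have "Q \<subseteq> {v}" using eq2 by (metis Inf_empty top_greatest)
    then have "aff_dim Q \<le> aff_dim {v}" by (rule aff_dim_subset)
    then have False using assms(2) by simp
  }
  moreover {
    fix C assume "?X = {C}"
    then have "C = {v}" "C facet_of Q" using eq2 by auto
    then have False using facet_dim1[OF assms(2)] by fastforce
  }
  ultimately show False using \<open>?X = {} \<or> (\<exists>C. ?X = {C})\<close> by blast
qed

lemma facet_in_line:
  fixes Q :: "(real^2) set" and H :: "(real^2) set set"
  assumes "finite H" "Q = \<Inter>H" "\<And>h. h \<in> H \<Longrightarrow> h = {x. a h \<bullet> x \<le> b h}" "C facet_of Q"
  shows "\<exists>h\<in>H. C \<subseteq> {x. a h \<bullet> x = b h}"
proof -
  have cC: "convex C" using assms(4) facet_of_imp_face_of face_of_imp_convex by blast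
  have "C \<noteq> {}" using assms(4) facet_of_def by blast
  then obtain x where x: "x \<in> rel_interior C" using rel_interior_eq_empty[OF cC] by blast
  have xC: "x \<in> C" using x rel_interior_subset by blast
  have CQ: "C \<subseteq> Q" using assms(4) facet_of_imp_subset by blast
  have "\<exists>h\<in>H. a h \<bullet> x = b h"
  proof (rule ccontr)
    assume "\<not> ?thesis"
    moreover have "\<forall>h\<in>H. a h \<bullet> x \<le> b h" using xC CQ assms(2,3) by blast
    ultimately have lt: "\<forall>h\<in>H. a h \<bullet> x < b h" by force
    define U where "U = (\<Inter>h\<in>H. {y. a h \<bullet> y < b h})"
    have "open U" unfolding U_def using assms(1) by (intro open_INT) (auto simp: open_halfspace_lt)
    moreover have "U \<subseteq> Q"
    proof
      fix y assume "y \<in> U"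
      then have "\<forall>h\<in>H. y \<in> h" unfolding U_def using assms(3) by (metis (no_types, lifting) INT_E less_imp_le mem_Collect_eq)
      then show "y \<in> Q" using assms(2) by blast
    qed
    ultimately have "U \<subseteq> interior Q" by (simp add: interior_maximal)
    then have "x \<in> rel_interior Q" using lt interior_subset_rel_interior unfolding U_def by blast
    moreover have "C \<subseteq> rel_frontier Q"
      using face_of_subset_rel_frontier assms(4) facet_of_imp_face_of facet_of_irrefl by metis
    ultimately show False using xC by (auto simp: rel_frontier_def)
  qed
  then obtain h where h: "h \<in> H" "a h \<bullet> x = b h" by blast
  define D where "D = C \<inter> {y. a h \<bullet> y = b h}"
  have "D face_of C" unfolding D_def
    using CQ assms(2,3) h(1) by (intro face_of_Int_supporting_hyperplane_le cC) blast
  moreover have "x \<in> D" using xC h unfolding D_def by blast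
  ultimately have "D = C" using face_of_subset_rel_frontier x by (fastforce simp: rel_frontier_def)
  then show ?thesis using h(1) unfolding D_def by blast
qed

lemma facet_line_unique:
  fixes Q :: "(real^2) set"
  assumes "convex Q" "aff_dim Q = 2" "a \<noteq> 0" "Q \<subseteq> {x. a \<bullet> x \<le> b}"
    "C1 facet_of Q" "C2 facet_of Q" "C1 \<subseteq> {x. a \<bullet> x = b}" "C2 \<subseteq> {x. a \<bullet> x = b}"
  shows "C1 = C2"
proof -
  define D where "D = Q \<inter> {x. a \<bullet> x = b}"
  have fD: "D face_of Q" unfolding D_def using assms(1,4) by (intro face_of_Int_supporting_hyperplane_le) auto
  have dD: "aff_dim D \<le> 1"
  proof -
    have "aff_dim D \<le> aff_dim {x. a \<bullet> x = b}" unfolding D_def by (intro aff_dim_subset) auto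
    then show ?thesis using assms(3) by (simp add: aff_dim_hyperplane)
  qed
  have eq: "C = D" if "C facet_of Q" "C \<subseteq> {x. a \<bullet> x = b}" for C
  proof (rule ccontr)
    assume ne: "C \<noteq> D"
    have "C \<subseteq> D" using that facet_of_imp_subset unfolding D_def by blast
    then have "C face_of D" using face_of_subset[of C Q D] that facet_of_imp_face_of face_of_imp_subset fD by blast
    then have "aff_dim C < aff_dim D" using face_of_aff_dim_lt[OF face_of_imp_convex[OF fD]] ne by blast
    then show False using dD facet_dim1[OF assms(2) that(1)] by simp
  qed
  show ?thesis using eq assms(5-8) by metis
qed

lemma helly_step:
  fixes F :: "(real^2) set set"
  assumes "finite F" "\<forall>h\<in>F. convex h" "K \<subseteq> \<Inter>F" "K \<noteq> {}" "\<Inter>F \<subseteq> {x. a \<bullet> x \<le> b}"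
  shows "\<exists>T\<subseteq>F. card T \<le> 2 \<and> \<Inter>T \<subseteq> {x. a \<bullet> x \<le> b}"
proof (cases "card F \<le> 2")
  case True then show ?thesis using assms(5) by blast
next
  case False
  define Og where "Og = {x. a \<bullet> x > b}"
  define G where "G = insert Og F"
  have IG: "\<Inter>G = {}" using assms(5) by (auto simp: G_def Og_def)
  have "card F \<le> card G" unfolding G_def using assms(1) by (simp add: card_insert_le)
  then have cG: "card G \<ge> DIM(real^2) + 1" using False by simp
  have cvx: "\<forall>s\<in>G. convex s" using assms(2) by (auto simp: G_def Og_def convex_halfspace_gt)
  have "\<not> (\<forall>t. t \<subseteq> G \<and> card t = DIM(real^2) + 1 \<longrightarrow> \<Inter>t \<noteq> {})"
  proof
    assume "\<forall>t. t \<subseteq> G \<and> card t = DIM(real^2) + 1 \<longrightarrow> \<Inter>t \<noteq> {}"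
    then have "\<Inter>G \<noteq> {}" using Helly[OF cG cvx] by blast
    then show False using IG by simp
  qed
  then obtain t where t: "t \<subseteq> G" "card t = 3" "\<Inter>t = {}" by auto
  show ?thesis
  proof (cases "Og \<in> t")
    case False
    then have "t \<subseteq> F" using t(1) by (auto simp: G_def)
    then have "K \<subseteq> \<Inter>t" using assms(3) by blast
    then show ?thesis using t(3) assms(4) by simp
  next
    case True
    define T where "T = t - {Og}"
    have "T \<subseteq> F" using t(1) by (auto simp: G_def T_def)
    moreover have "card T = 2" using t(2) True unfolding T_def by (simp add: card_Diff_singleton)
    moreover have "\<Inter>T \<subseteq> {x. a \<bullet> x \<le> b}"
    proof
      fix x assume x: "x \<in> \<Inter>T"
      show "x \<in> {x. a \<bullet> x \<le> b}"
      proof (rule ccontr)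
        assume "x \<notin> {x. a \<bullet> x \<le> b}"
        then have "x \<in> Og" by (auto simp: Og_def)
        then have "x \<in> \<Inter>t" using x unfolding T_def by blast
        then show False using t(3) by simp
      qed
    qed
    ultimately show ?thesis by auto
  qed
qed

theorem lemma3p4:
  fixes P C Q :: "(real^2) set"
  assumes "finite P"
    and "convex_body C"
    and "convex_polygon Q"
    and "P \<inter> C \<subseteq> Q" and "Q \<subseteq> C"
  shows "\<exists>Q'. convex_polygon Q'
      \<and> P \<inter> C \<subseteq> Q' \<and> Q' \<subseteq> Q
      \<and> card (vertices Q') \<le> 2 * card (vertices Q)
      \<and> (\<forall>E \<in> edges Q'. \<exists>p\<in>P. \<exists>q\<in>P. p \<noteq> q \<and> E \<subseteq> affine hull {p, q})"
proof -
  define S where "S = P \<inter> C"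
  define K where "K = convex hull S"
  have finS: "finite S" using assms(1) unfolding S_def by simp
  have SP: "S \<subseteq> P" unfolding S_def by simp
  obtain V where V: "finite V" "Q = convex hull V" using assms(3) unfolding convex_polygon_def by blast
  have polyQ: "polytope Q" using V unfolding polytope_def by blast
  have convQ: "convex Q" using polyQ polytope_imp_convex by blast
  have SQ: "S \<subseteq> Q" using assms(4) unfolding S_def .
  have KQ: "K \<subseteq> Q" unfolding K_def using SQ convQ by (intro hull_minimal) auto
  have polyK: "polytope K" unfolding K_def using finS polytope_def by blast
  have SK: "S \<subseteq> K" unfolding K_def by (rule hull_subset)
  have finVQ: "finite (vertices Q)" unfolding vertices_def
    using finite_polyhedron_extreme_points[OF polytope_imp_polyhedron[OF polyQ]] .
  have "aff_dim K \<le> 2" using aff_dim_le_DIM[of K] by simp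
  then consider "aff_dim K \<le> 1" | "aff_dim K = 2" by linarith
  then show ?thesis
  proof cases
    case 1
    have cpK: "convex_polygon K" unfolding convex_polygon_def K_def using finS by (intro exI[of _ S]) simp
    have "card (vertices K) \<le> 2 * card (vertices Q)"
    proof (cases "K = {}")
      case True then show ?thesis by (simp add: vertices_def)
    next
      case False
      have "card (vertices K) \<le> 2" unfolding vertices_def
        using extreme_le2[OF polytope_imp_compact[OF polyK] polytope_imp_convex[OF polyK] 1] by simp
      moreover have "Q \<noteq> {}" using False KQ by blast
      then obtain x where "x extreme_point_of Q"
        using extreme_point_exists_convex[OF polytope_imp_compact[OF polyQ] convQ] by blast
      then have "vertices Q \<noteq> {}" unfolding vertices_def by blast
      then have "card (vertices Q) \<ge> 1" using finVQ by (simp add: Suc_le_eq card_gt_0_iff)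
      ultimately show ?thesis by linarith
    qed
    moreover have "\<forall>E \<in> edges K. \<exists>p\<in>P. \<exists>q\<in>P. p \<noteq> q \<and> E \<subseteq> affine hull {p, q}"
    proof
      fix E assume "E \<in> edges K"
      then have E: "E face_of K" "aff_dim E = 1" unfolding edges_def by auto
      have "aff_dim E \<le> aff_dim K" using face_of_imp_subset[OF E(1)] by (rule aff_dim_subset)
      then have dK: "aff_dim K = 1" using 1 E(2) by simp
      then have dS: "aff_dim S = 1" unfolding K_def by (simp add: aff_dim_convex_hull)
      then have "S \<noteq> {}" by auto
      then obtain p where p: "p \<in> S" by blast
      then obtain q where q: "q \<in> S" "q \<noteq> p" using dim1_two_points[OF dS] by metis
      have "affine hull {p, q} = affine hull S"
      proof (rule affine_dim_equal)
        show "affine hull {p, q} \<subseteq> affine hull S" using p q by (intro hull_mono) auto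
        show "aff_dim (affine hull {p, q}) = aff_dim (affine hull S)" using dS q(2) by (simp add: aff_dim_2)
      qed auto
      moreover have "E \<subseteq> affine hull S"
        using face_of_imp_subset[OF E(1)] hull_subset[of K affine] unfolding K_def affine_hull_convex_hull by (rule subset_trans)
      ultimately have "E \<subseteq> affine hull {p, q}" by simp
      moreover have "p \<in> P" "q \<in> P" using p q SP by auto
      ultimately show "\<exists>p\<in>P. \<exists>q\<in>P. p \<noteq> q \<and> E \<subseteq> affine hull {p, q}"
        using q(2) by (rule_tac bexI[of _ p], rule_tac bexI[of _ q]) auto
    qed
    moreover have "P \<inter> C \<subseteq> K" using SK unfolding S_def .
    ultimately show ?thesis using cpK KQ by (intro exI[of _ K]) simp
  next
    case 2
    have ahK: "affine hull K = UNIV" using 2 aff_dim_eq_full[of K] by simp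
    have "polyhedron K" using polyK polytope_imp_polyhedron by blast
    then obtain FK where FK: "finite FK" "K = affine hull K \<inter> \<Inter>FK"
      "\<forall>h\<in>FK. \<exists>a b. a \<noteq> 0 \<and> h = {x. a \<bullet> x \<le> b}"
      "\<forall>F'. F' \<subset> FK \<longrightarrow> K \<subset> affine hull K \<inter> \<Inter>F'"
      unfolding polyhedron_Int_affine_minimal by blast
    obtain aK bK where abK: "\<And>h. h \<in> FK \<Longrightarrow> aK h \<noteq> 0 \<and> h = {x. aK h \<bullet> x \<le> bK h}"
      using FK(3) by metis
    have KFK: "K = \<Inter>FK" using FK(2) ahK by simp
    have pq: "\<exists>p\<in>S. \<exists>q\<in>S. p \<noteq> q \<and> aK h \<bullet> p = bK h \<and> aK h \<bullet> q = bK h" if h: "h \<in> FK" for h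
    proof -
      have fc: "K \<inter> {x. aK h \<bullet> x = bK h} facet_of K"
        using facet_of_polyhedron_explicit[OF FK(1) FK(2) abK] FK(4) h by blast
      then have "aff_dim (K \<inter> {x. aK h \<bullet> x = bK h}) = 1" using facet_dim1 2 by blast
      then obtain p q where "p \<noteq> q" "p extreme_point_of K" "q extreme_point_of K"
          "p \<in> K \<inter> {x. aK h \<bullet> x = bK h}" "q \<in> K \<inter> {x. aK h \<bullet> x = bK h}"
        using face_two_extreme[OF polyK facet_of_imp_face_of[OF fc]] by metis
      moreover have "p \<in> S" "q \<in> S" using calculation(2,3) extreme_points_of_convex_hull[of S] unfolding K_def by blast+
      ultimately show ?thesis by blast
    qed
    have dQ: "aff_dim Q = 2"
    proof -
      have "aff_dim K \<le> aff_dim Q" using KQ by (rule aff_dim_subset)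
      moreover have "aff_dim Q \<le> 2" using aff_dim_le_DIM[of Q] by simp
      ultimately show ?thesis using 2 by simp
    qed
    have ahQ: "affine hull Q = UNIV" using dQ aff_dim_eq_full[of Q] by simp
    have "polyhedron Q" using polyQ polytope_imp_polyhedron by blast
    then obtain FQ where FQ: "finite FQ" "Q = affine hull Q \<inter> \<Inter>FQ"
      "\<forall>h\<in>FQ. \<exists>a b. a \<noteq> 0 \<and> h = {x. a \<bullet> x \<le> b}"
      "\<forall>F'. F' \<subset> FQ \<longrightarrow> Q \<subset> affine hull Q \<inter> \<Inter>F'"
      unfolding polyhedron_Int_affine_minimal by blast
    obtain aQ bQ where abQ: "\<And>h. h \<in> FQ \<Longrightarrow> aQ h \<noteq> 0 \<and> h = {x. aQ h \<bullet> x \<le> bQ h}"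
      using FQ(3) by metis
    have QFQ: "Q = \<Inter>FQ" using FQ(2) ahQ by simp
    have Kne: "K \<noteq> {}" using 2 by auto
    have cvxFK: "\<forall>h\<in>FK. convex h" using abK by (metis convex_halfspace_le)
    have "\<exists>T\<subseteq>FK. card T \<le> 2 \<and> \<Inter>T \<subseteq> g" if g: "g \<in> FQ" for g
    proof -
      have "\<Inter>FK \<subseteq> {x. aQ g \<bullet> x \<le> bQ g}" using KFK KQ QFQ g abQ[OF g] by blast
      then have "\<exists>T\<subseteq>FK. card T \<le> 2 \<and> \<Inter>T \<subseteq> {x. aQ g \<bullet> x \<le> bQ g}"
        using helly_step[OF FK(1) cvxFK _ Kne] KFK by simp
      then show ?thesis using abQ[OF g] by simp
    qed
    then obtain T where T: "\<And>g. g \<in> FQ \<Longrightarrow> T g \<subseteq> FK \<and> card (T g) \<le> 2 \<and> \<Inter>(T g) \<subseteq> g"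
      by metis
    define H where "H = (\<Union>g\<in>FQ. T g)"
    define Q' where "Q' = \<Inter>H"
    have HFK: "H \<subseteq> FK" unfolding H_def using T by blast
    have finH: "finite H" using HFK FK(1) finite_subset by blast
    have cardH: "card H \<le> 2 * card FQ"
    proof -
      have "card H \<le> (\<Sum>g\<in>FQ. card (T g))" unfolding H_def using FQ(1) by (rule card_UN_le)
      also have "\<dots> \<le> (\<Sum>g\<in>FQ. 2)" using T by (intro sum_mono) auto
      finally show ?thesis by simp
    qed
    have KQ': "K \<subseteq> Q'" unfolding Q'_def using HFK KFK by blast
    have Q'Q: "Q' \<subseteq> Q"
    proof
      fix x assume x: "x \<in> Q'"
      have "x \<in> g" if g: "g \<in> FQ" for g
      proof -
        have "T g \<subseteq> H" unfolding H_def using g by blast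
        then have "x \<in> \<Inter>(T g)" using x unfolding Q'_def by blast
        then show ?thesis using T[OF g] by blast
      qed
      then show "x \<in> Q" by (subst QFQ) blast
    qed
    have phQ': "polyhedron Q'" unfolding Q'_def
    proof (rule polyhedron_Inter[OF finH])
      fix h assume "h \<in> H"
      then have "h = {x. aK h \<bullet> x \<le> bK h}" using abK HFK by blast
      then show "polyhedron h" by (metis polyhedron_halfspace_le)
    qed
    have bQ': "bounded Q'" using Q'Q polyQ polytope_imp_bounded bounded_subset by blast
    have polyQ': "polytope Q'" using phQ' bQ' polytope_eq_bounded_polyhedron by blast
    have cpQ': "convex_polygon Q'" using polyQ' unfolding polytope_def convex_polygon_def .
    have convQ': "convex Q'" using polyQ' polytope_imp_convex by blast
    have dQ': "aff_dim Q' = 2"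
    proof -
      have "aff_dim K \<le> aff_dim Q'" using KQ' by (rule aff_dim_subset)
      moreover have "aff_dim Q' \<le> 2" using aff_dim_le_DIM[of Q'] by simp
      ultimately show ?thesis using 2 by simp
    qed
    have Hrep: "\<And>h. h \<in> H \<Longrightarrow> h = {x. aK h \<bullet> x \<le> bK h}" using abK HFK by blast
    have edg: "\<forall>E \<in> edges Q'. \<exists>p\<in>P. \<exists>q\<in>P. p \<noteq> q \<and> E \<subseteq> affine hull {p, q}"
    proof
      fix E assume "E \<in> edges Q'"
      then have E: "E face_of Q'" "aff_dim E = 1" unfolding edges_def by auto
      have "E facet_of Q'" unfolding facet_of_def using E dQ' by auto
      then obtain h where h: "h \<in> H" "E \<subseteq> {x. aK h \<bullet> x = bK h}"
        using facet_in_line[OF finH Q'_def Hrep] by blast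
      have hK: "h \<in> FK" using h HFK by blast
      obtain p q where p: "p \<in> S" "q \<in> S" "p \<noteq> q" "aK h \<bullet> p = bK h" "aK h \<bullet> q = bK h"
        using pq[OF hK] by blast
      have "{x. aK h \<bullet> x = bK h} = affine hull {p, q}" using line_eq abK[OF hK] p by blast
      then show "\<exists>p\<in>P. \<exists>q\<in>P. p \<noteq> q \<and> E \<subseteq> affine hull {p, q}" using h p SP by blast
    qed
    have finFQ': "finite {C. C facet_of Q'}" using finite_polytope_facets[OF polyQ'] .
    have finFQf: "finite {C. C facet_of Q}" using finite_polytope_facets[OF polyQ] .
    have finVQ': "finite (vertices Q')" unfolding vertices_def
      using finite_polyhedron_extreme_points[OF phQ'] .
    have c1: "card (vertices Q') \<le> card {C. C facet_of Q'}"
    proof (rule double_count[where m=2 and R="\<lambda>v C. v \<in> C"])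
      show "finite (vertices Q')" by (rule finVQ')
      show "finite {C. C facet_of Q'}" by (rule finFQ')
      show "0 < (2::nat)" by simp
      fix v assume "v \<in> vertices Q'"
      then have "2 \<le> card {C. C facet_of Q' \<and> v \<in> C}"
        using vertex_ge2_facets[OF polyQ' dQ'] unfolding vertices_def by blast
      then show "2 \<le> card {C \<in> {C. C facet_of Q'}. v \<in> C}" by simp
    next
      fix C assume "C \<in> {C. C facet_of Q'}"
      then have fC: "C facet_of Q'" by simp
      have fc: "C face_of Q'" using fC facet_of_imp_face_of by blast
      have eqs: "{v \<in> vertices Q'. v \<in> C} = {v. v extreme_point_of C}"
        unfolding vertices_def using extreme_point_of_face[OF fc] by blast
      have pC: "polytope C" using face_of_polytope_polytope[OF polyQ' fc] .
      have "card {v. v extreme_point_of C} \<le> 2"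
        using extreme_le2[of C] pC polytope_imp_compact polytope_imp_convex facet_dim1[OF dQ' fC] by auto
      then show "card {v \<in> vertices Q'. v \<in> C} \<le> 2" using eqs by simp
    qed
    have c2: "card {C. C facet_of Q'} \<le> card H"
    proof -
      have ex: "\<exists>h\<in>H. C \<subseteq> {x. aK h \<bullet> x = bK h}" if "C \<in> {C. C facet_of Q'}" for C
        using facet_in_line[OF finH Q'_def Hrep] that by blast
      define f where "f C = (SOME h. h \<in> H \<and> C \<subseteq> {x. aK h \<bullet> x = bK h})" for C
      have f: "f C \<in> H \<and> C \<subseteq> {x. aK (f C) \<bullet> x = bK (f C)}" if "C \<in> {C. C facet_of Q'}" for C
        unfolding f_def using someI_ex[OF ex[OF that, unfolded Bex_def]] .
      have "inj_on f {C. C facet_of Q'}"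
      proof (rule inj_onI)
        fix C1 C2 assume a: "C1 \<in> {C. C facet_of Q'}" "C2 \<in> {C. C facet_of Q'}" "f C1 = f C2"
        have h: "f C1 \<in> H" using f[OF a(1)] by blast
        have "Q' \<subseteq> {x. aK (f C1) \<bullet> x \<le> bK (f C1)}" using h Hrep unfolding Q'_def by blast
        moreover have "aK (f C1) \<noteq> 0" using abK h HFK by blast
        ultimately show "C1 = C2"
          using facet_line_unique[OF convQ' dQ'] f[OF a(1)] f[OF a(2)] a by auto
      qed
      moreover have "f ` {C. C facet_of Q'} \<subseteq> H" using f by blast
      ultimately show ?thesis using card_inj_on_le finH by blast
    qed
    have c3: "card FQ \<le> card {C. C facet_of Q}"
    proof -
      define f where "f h = Q \<inter> {x. aQ h \<bullet> x = bQ h}" for h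
      have ff: "f h facet_of Q" if "h \<in> FQ" for h
        unfolding f_def using facet_of_polyhedron_explicit[OF FQ(1) FQ(2) abQ] FQ(4) that by blast
      have "inj_on f FQ"
      proof (rule inj_onI)
        fix h1 h2 assume a: "h1 \<in> FQ" "h2 \<in> FQ" "f h1 = f h2"
        have "aff_dim (f h1) = 1" using facet_dim1[OF dQ ff[OF a(1)]] .
        then obtain p q where pq: "p \<noteq> q" "p \<in> f h1" "q \<in> f h1"
          using face_two_extreme[OF polyQ facet_of_imp_face_of[OF ff[OF a(1)]]] by metis
        have "{x. aQ h1 \<bullet> x \<le> bQ h1} = {x. aQ h2 \<bullet> x \<le> bQ h2}"
        proof (rule halfplane_unique[OF _ _ dQ])
          show "aQ h1 \<noteq> 0" "aQ h2 \<noteq> 0" using abQ a by blast+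
          show "Q \<subseteq> {x. aQ h1 \<bullet> x \<le> bQ h1}" "Q \<subseteq> {x. aQ h2 \<bullet> x \<le> bQ h2}"
            using QFQ abQ a by blast+
          show "p \<noteq> q" by (rule pq(1))
          show "aQ h1 \<bullet> p = bQ h1" "aQ h1 \<bullet> q = bQ h1" using pq unfolding f_def by auto
          show "aQ h2 \<bullet> p = bQ h2" "aQ h2 \<bullet> q = bQ h2" using pq a(3) unfolding f_def by auto
        qed
        then show "h1 = h2" using abQ a by metis
      qed
      moreover have "f ` FQ \<subseteq> {C. C facet_of Q}" using ff by blast
      ultimately show ?thesis using card_inj_on_le finFQf by blast
    qed
    have c4: "card {C. C facet_of Q} \<le> card (vertices Q)"
    proof (rule double_count[where m=2 and R="\<lambda>C v. v \<in> C"])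
      show "finite {C. C facet_of Q}" by (rule finFQf)
      show "finite (vertices Q)" by (rule finVQ)
      show "0 < (2::nat)" by simp
      fix C assume "C \<in> {C. C facet_of Q}"
      then have fC: "C facet_of Q" by simp
      obtain p q where pq: "p \<noteq> q" "p extreme_point_of Q" "q extreme_point_of Q" "p \<in> C" "q \<in> C"
        using face_two_extreme[OF polyQ facet_of_imp_face_of[OF fC] facet_dim1[OF dQ fC]] by metis
      have "{p, q} \<subseteq> {v \<in> vertices Q. v \<in> C}" using pq unfolding vertices_def by auto
      moreover have "finite {v \<in> vertices Q. v \<in> C}" using finVQ by simp
      ultimately have "card {p, q} \<le> card {v \<in> vertices Q. v \<in> C}" by (rule card_mono[rotated])
      then show "2 \<le> card {v \<in> vertices Q. v \<in> C}" using pq(1) by simp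
    next
      fix v assume "v \<in> vertices Q"
      have "card {C. C facet_of Q \<and> v \<in> C} \<le> 2" using vertex_le2_facets[OF polyQ dQ] .
      then show "card {C \<in> {C. C facet_of Q}. v \<in> C} \<le> 2" by simp
    qed
    have "card (vertices Q') \<le> 2 * card (vertices Q)" using c1 c2 cardH c3 c4 by linarith
    then show ?thesis using cpQ' SK KQ' Q'Q edg unfolding S_def by blast
  qed
qed

end
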